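(* Let $\Lambda>1$, $a\in C^\infty(\mathbb{T}^2;[1,\Lambda])$ and $F_a>0$ be such that for each $F\in(-F_a,F_a)$ and each uniformly continuous $u_0:\mathbb{R}^2\to\mathbb{R}$, the viscosity solutions $u^\varepsilon$ of $u^\varepsilon_t=a(\tfrac{x}{\varepsilon})\,\mathrm{tr}((\mathrm{Id}-\widehat{Du^\varepsilon}\otimes\widehat{Du^\varepsilon})D^2u^\varepsilon)+\tfrac1\varepsilon Da(\tfrac{x}{\varepsilon})\cdot Du^\varepsilon+\tfrac1\varepsilon F\|Du^\varepsilon\|$ in $\mathbb{R}^2\times(0,\infty)$, $u^\varepsilon(\cdot,0)=u_0$, converge to $u_0$ locally uniformly in $\mathbb{R}^2\times[0,\infty)$. Then for each $F\in(-F_a,F_a)$ and $n\in S^1$, the speeds $c^*(n,F)$ and $c_*(n,F)$ are well-defined and $c^*(n,F)=c_*(n,F)=0$.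
   Context: For $n\in S^1$ and $F\in\mathbb{R}$, let $(S_t)_{t\ge0}$ be the (level-set) solution of the forced heterogeneous curvature flow $V_n=-a(x)\kappa-\nabla a(x)\cdot n+F$ with $S_0=\{x\cdot n\le 0\}$, where $n$ is the outward normal to $\partial S_t$, $V_n$ the outward normal velocity and $\kappa$ the mean curvature (with $\kappa\ge0$ for convex sets). Then $c_*(n,F)=\lim_{t\to\infty}\frac1t\inf_{x\in\partial S_t}x\cdot n$ and $c^*(n,F)=\lim_{t\to\infty}\frac1t\sup_{x\in\partial S_t}x\cdot n$; "well-defined" means these limits exist. $\widehat p=p/|p|$. *)

theory Defs
  imports "HOL-Analysis.Analysis"
begin

coinductive smooth_fun :: "(real^2 \<Rightarrow> real) \<Rightarrow> bool" where
  "\<lbrakk> \<forall>x. f differentiable (at x);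
     \<forall>v. smooth_fun (\<lambda>x. frechet_derivative f (at x) v) \<rbrakk> \<Longrightarrow> smooth_fun f"

text \<open>Z^2-periodic functions, i.e. functions on the torus T^2.\<close>
definition periodic2 :: "(real^2 \<Rightarrow> real) \<Rightarrow> bool" where
  "periodic2 a \<longleftrightarrow> (\<forall>x i. a (x + axis i 1) = a x)"

definition grad :: "(real^2 \<Rightarrow> real) \<Rightarrow> real^2 \<Rightarrow> real^2" where
  "grad f x = (\<chi> i. frechet_derivative f (at x) (axis i 1))"

definition outer :: "real^2 \<Rightarrow> real^2^2" where
  "outer v = (\<chi> i j. v $ i * v $ j)"

definition Gop :: "(real^2 \<Rightarrow> real) \<Rightarrow> real \<Rightarrow> real \<Rightarrow> real^2 \<Rightarrow> real^2 \<Rightarrow> real^2^2 \<Rightarrow> real" where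
  "Gop a eps F x p X =
     a ((1/eps) *\<^sub>R x) * trace ((mat 1 - outer ((1 / norm p) *\<^sub>R p)) ** X)
     + (1/eps) * (grad a ((1/eps) *\<^sub>R x) \<bullet> p) + (1/eps) * F * norm p"

text \<open>Upper / lower semicontinuous envelopes (the operator is singular at p = 0).\<close>
definition env_up :: "(real^2 \<Rightarrow> real^2 \<Rightarrow> real^2^2 \<Rightarrow> real) \<Rightarrow> real^2 \<Rightarrow> real^2 \<Rightarrow> real^2^2 \<Rightarrow> real" where
  "env_up g x p X = Inf {Sup {g x' p' X' | x' p' X'. p' \<noteq> 0 \<and> dist x' x < d \<and> dist p' p < d \<and> dist X' X < d} | d. d > 0}"

definition env_low :: "(real^2 \<Rightarrow> real^2 \<Rightarrow> real^2^2 \<Rightarrow> real) \<Rightarrow> real^2 \<Rightarrow> real^2 \<Rightarrow> real^2^2 \<Rightarrow> real" where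
  "env_low g x p X = Sup {Inf {g x' p' X' | x' p' X'. p' \<noteq> 0 \<and> dist x' x < d \<and> dist p' p < d \<and> dist X' X < d} | d. d > 0}"

definition test_fun :: "((real^2) \<times> real \<Rightarrow> real) \<Rightarrow> ((real^2) \<times> real \<Rightarrow> real^2) \<Rightarrow> ((real^2) \<times> real \<Rightarrow> real)
    \<Rightarrow> ((real^2) \<times> real \<Rightarrow> real^2^2) \<Rightarrow> ((real^2) \<times> real \<Rightarrow> real^2) \<Rightarrow> bool" where
  "test_fun \<phi> \<phi>x \<phi>t \<phi>xx \<phi>xt \<longleftrightarrow>
     (\<forall>z. (\<phi> has_derivative (\<lambda>(h, s). \<phi>x z \<bullet> h + \<phi>t z * s)) (at z)) \<and>
     (\<forall>z. (\<phi>x has_derivative (\<lambda>(h, s). \<phi>xx z *v h + s *\<^sub>R \<phi>xt z)) (at z)) \<and>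
     continuous_on UNIV \<phi>t \<and> continuous_on UNIV \<phi>xx \<and> continuous_on UNIV \<phi>xt"

definition visc_sub :: "(real^2 \<Rightarrow> real^2 \<Rightarrow> real^2^2 \<Rightarrow> real) \<Rightarrow> ((real^2) \<times> real \<Rightarrow> real) \<Rightarrow> bool" where
  "visc_sub g u \<longleftrightarrow>
    (\<forall>\<phi> \<phi>x \<phi>t \<phi>xx \<phi>xt x0 t0. test_fun \<phi> \<phi>x \<phi>t \<phi>xx \<phi>xt \<and> t0 > 0 \<and>
       (\<exists>d>0. \<forall>x t. t > 0 \<and> dist (x, t) (x0, t0) < d \<longrightarrow> u (x, t) - \<phi> (x, t) \<le> u (x0, t0) - \<phi> (x0, t0))
     \<longrightarrow> \<phi>t (x0, t0) \<le> env_up g x0 (\<phi>x (x0, t0)) (\<phi>xx (x0, t0)))"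

definition visc_super :: "(real^2 \<Rightarrow> real^2 \<Rightarrow> real^2^2 \<Rightarrow> real) \<Rightarrow> ((real^2) \<times> real \<Rightarrow> real) \<Rightarrow> bool" where
  "visc_super g u \<longleftrightarrow>
    (\<forall>\<phi> \<phi>x \<phi>t \<phi>xx \<phi>xt x0 t0. test_fun \<phi> \<phi>x \<phi>t \<phi>xx \<phi>xt \<and> t0 > 0 \<and>
       (\<exists>d>0. \<forall>x t. t > 0 \<and> dist (x, t) (x0, t0) < d \<longrightarrow> u (x, t) - \<phi> (x, t) \<ge> u (x0, t0) - \<phi> (x0, t0))
     \<longrightarrow> \<phi>t (x0, t0) \<ge> env_low g x0 (\<phi>x (x0, t0)) (\<phi>xx (x0, t0)))"

text \<open>Viscosity solution of the initial value problem, in the standard uniqueness class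
  (uniformly continuous on R^2 x [0,T] for every T).\<close>
definition visc_sol_ivp :: "(real^2 \<Rightarrow> real^2 \<Rightarrow> real^2^2 \<Rightarrow> real) \<Rightarrow> (real^2 \<Rightarrow> real) \<Rightarrow> ((real^2) \<times> real \<Rightarrow> real) \<Rightarrow> bool" where
  "visc_sol_ivp g u0 u \<longleftrightarrow>
     (\<forall>T>0. uniformly_continuous_on {z. 0 \<le> snd z \<and> snd z \<le> T} u) \<and>
     (\<forall>x. u (x, 0) = u0 x) \<and> visc_sub g u \<and> visc_super g u"

definition level_front :: "((real^2) \<times> real \<Rightarrow> real) \<Rightarrow> real \<Rightarrow> (real^2) set" where
  "level_front u t = frontier {x. 0 \<le> u (x, t)}"

end

theory Submission
  imports Defs
begin

definition intvec :: "real^2 \<Rightarrow> bool" where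
  "intvec k \<longleftrightarrow> (\<forall>i. k $ i \<in> \<int>)"

lemma vec2_decomp: "(k::real^2) = (k$1) *\<^sub>R axis 1 1 + (k$2) *\<^sub>R axis 2 1"
  by (simp add: vec_eq_iff forall_2 axis_def)

lemma periodic_int_axis:
  assumes "periodic2 a"
  shows "a (x + of_int m *\<^sub>R axis i 1) = a x"
proof (induction m arbitrary: x rule: int_induct[where k=0])
  case base then show ?case by simp
next
  case (step1 m)
  have "a (x + of_int (m+1) *\<^sub>R axis i 1) = a ((x + of_int m *\<^sub>R axis i 1) + axis i 1)"
    by (simp add: algebra_simps)
  also have "\<dots> = a x" using assms step1 by (simp add: periodic2_def)
  finally show ?case .
next
  case (step2 m)
  have "a x = a (x + of_int (m - 1) *\<^sub>R axis i 1 + of_int 1 *\<^sub>R axis i 1)"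
    using step2 by (simp add: algebra_simps)
  also have "\<dots> = a (x + of_int (m - 1) *\<^sub>R axis i 1)"
    using assms by (simp add: periodic2_def)
  finally show ?case by simp
qed

lemma periodic_int:
  assumes "periodic2 a" "intvec k"
  shows "a (x + k) = a x"
proof -
  obtain m1 where m1: "k$1 = of_int m1" using assms(2) unfolding intvec_def by (meson Ints_cases)
  obtain m2 where m2: "k$2 = of_int m2" using assms(2) unfolding intvec_def by (meson Ints_cases)
  have "a (x + k) = a ((x + of_int m1 *\<^sub>R axis 1 1) + of_int m2 *\<^sub>R axis 2 1)"
    by (subst vec2_decomp) (simp add: m1 m2 algebra_simps)
  also have "\<dots> = a x" using periodic_int_axis[OF assms(1)] by simp
  finally show ?thesis .
qed

lemma intvec_uminus: "intvec k \<Longrightarrow> intvec (-k)"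
  by (simp add: intvec_def)

lemma deriv_shift:
  assumes "periodic2 a" "intvec k" "(a has_derivative D) (at (x + k))"
  shows "(a has_derivative D) (at x)"
proof -
  have "((\<lambda>y. y + k) has_derivative id) (at x)"
    by (auto intro!: derivative_eq_intros simp: id_def)
  from has_derivative_compose[OF this, of a D] assms(3)
  have "((\<lambda>y. a (y + k)) has_derivative D) (at x)" by (simp add: o_def id_def)
  moreover have "(\<lambda>y. a (y + k)) = a" using periodic_int[OF assms(1,2)] by auto
  ultimately show ?thesis by simp
qed

lemma grad_periodic:
  assumes "periodic2 a" "intvec k"
  shows "grad a (x + k) = grad a x"
proof -
  have "\<And>D. (a has_derivative D) (at (x + k)) \<longleftrightarrow> (a has_derivative D) (at x)"
  proof
    fix D assume "(a has_derivative D) (at (x + k))"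
    then show "(a has_derivative D) (at x)" using deriv_shift assms by blast
  next
    fix D assume "(a has_derivative D) (at x)"
    then have "(a has_derivative D) (at ((x + k) + -k))" by simp
    then show "(a has_derivative D) (at (x + k))" using deriv_shift[OF assms(1) intvec_uminus[OF assms(2)]] by blast
  qed
  then have "frechet_derivative a (at (x + k)) = frechet_derivative a (at x)"
    unfolding frechet_derivative_def by simp
  then show ?thesis unfolding grad_def by simp
qed

lemma trace_scaleR: "trace (A ** (c *\<^sub>R X)) = c * trace (A ** (X::real^2^2))"
  by (simp add: trace_def matrix_matrix_mult_def sum_distrib_left algebra_simps)

lemma Gop_scale:
  assumes "periodic2 a" "intvec k" "e > 0"
  shows "e * Gop a e F x p X = Gop a 1 F ((1/e) *\<^sub>R x + k) p (e *\<^sub>R X)"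
proof -
  have 1: "a (k + (1/e) *\<^sub>R x) = a ((1/e) *\<^sub>R x)" using periodic_int assms by (metis add.commute)
  have 2: "grad a (k + (1/e) *\<^sub>R x) = grad a ((1/e) *\<^sub>R x)" using grad_periodic assms by (metis add.commute)
  show ?thesis using assms by (simp add: Gop_def 1 2 trace_scaleR algebra_simps)
qed

lemma smooth_grad_cont:
  assumes "smooth_fun a"
  shows "continuous_on UNIV (grad a)"
proof -
  from assms have "\<forall>v. smooth_fun (\<lambda>x. frechet_derivative a (at x) v)"
    by (cases rule: smooth_fun.cases) auto
  then have "\<And>v. \<forall>x. (\<lambda>x. frechet_derivative a (at x) v) differentiable (at x)"
    by (metis smooth_fun.cases)
  then have c: "\<And>v. continuous_on UNIV (\<lambda>x. frechet_derivative a (at x) v)"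
    by (intro continuous_at_imp_continuous_on ballI differentiable_imp_continuous_within) auto
  show ?thesis unfolding grad_def
    by (intro continuous_on_vec_lambda c)
qed

lemma trace_bound:
  assumes "norm q \<le> 1"
  shows "\<bar>trace ((mat 1 - outer q) ** X)\<bar> \<le> 8 * norm (X::real^2^2)"
proof -
  have M: "\<bar>(mat 1 - outer q) $ i $ j\<bar> \<le> 2" for i j
  proof -
    have "\<bar>q$i\<bar> \<le> 1" "\<bar>q$j\<bar> \<le> 1" using component_le_norm_cart[of q] assms by (meson order_trans)+
    then have "\<bar>q$i * q$j\<bar> \<le> 1" by (simp add: abs_mult mult_le_one)
    then have "-1 \<le> q$i * q$j \<and> q$i * q$j \<le> 1" by arith
    then show ?thesis by (auto simp: outer_def mat_def)
  qed
  have Xb: "\<bar>X $ j $ i\<bar> \<le> norm X" for i j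
    by (rule order_trans[OF component_le_norm_cart Finite_Cartesian_Product.norm_nth_le])
  have t: "\<bar>((mat 1 - outer q) $ i $ j) * (X $ j $ i)\<bar> \<le> 2 * norm X" for i j
    unfolding abs_mult by (intro mult_mono M Xb) auto
  have "\<bar>trace ((mat 1 - outer q) ** X)\<bar>
      = \<bar>\<Sum>i\<in>UNIV. \<Sum>j\<in>UNIV. ((mat 1 - outer q) $ i $ j) * (X $ j $ i)\<bar>"
    by (simp add: trace_def matrix_matrix_mult_def)
  also have "\<dots> \<le> (\<Sum>i\<in>(UNIV::2 set). \<Sum>j\<in>(UNIV::2 set). 2 * norm X)"
    by (rule order_trans[OF sum_abs] sum_mono order_trans[OF sum_abs] sum_mono t)+
  also have "\<dots> = 8 * norm X" by simp
  finally show ?thesis .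
qed

lemma grad_bdd:
  assumes "smooth_fun a" "bounded S"
  shows "\<exists>B. \<forall>y\<in>S. norm (grad a y) \<le> B"
proof -
  have cS: "compact (closure S)" using assms(2) by (simp add: compact_closure)
  have c: "continuous_on (closure S) (grad a)"
    using continuous_on_subset[OF smooth_grad_cont[OF assms(1)]] by blast
  from c cS have cI: "compact (grad a ` closure S)" by (rule compact_continuous_image)
  obtain B where "\<forall>z\<in>grad a ` closure S. norm z \<le> B"
    using compact_imp_bounded[OF cI] unfolding bounded_iff by blast
  then show ?thesis using closure_subset by blast
qed

lemma tri3: "\<bar>(x::real) + y + z\<bar> \<le> \<bar>x\<bar> + \<bar>y\<bar> + \<bar>z\<bar>" by arith

lemma Gop_locbdd:
  assumes "smooth_fun a" "\<forall>x. 1 \<le> a x \<and> a x \<le> \<Lambda>"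
  shows "\<exists>C. \<forall>x' p' X'. p' \<noteq> 0 \<and> dist x' x < d \<and> dist p' p < d \<and> dist X' X < d
           \<longrightarrow> \<bar>Gop a e F x' p' X'\<bar> \<le> C"
proof -
  have bnd: "bounded ((\<lambda>y. (1/e) *\<^sub>R y) ` ball x d)"
    by (rule bounded_linear_image[OF bounded_ball bounded_linear_scaleR_right])
  obtain B where B0: "\<forall>y\<in>(\<lambda>y. (1/e) *\<^sub>R y) ` ball x d. norm (grad a y) \<le> B"
    using grad_bdd[OF assms(1) bnd] by (elim exE)
  have B: "norm (grad a ((1/e) *\<^sub>R y)) \<le> B" if "y \<in> ball x d" for y
    using B0 that by blast
  define C where "C = \<Lambda> * (8 * (norm X + d)) + \<bar>1/e\<bar> * (\<bar>B\<bar> * (norm p + d)) + \<bar>1/e\<bar> * \<bar>F\<bar> * (norm p + d)"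
  show ?thesis
  proof (intro exI allI impI)
    fix x' p' X' assume h: "p' \<noteq> 0 \<and> dist x' x < d \<and> dist p' p < d \<and> dist X' X < d"
    have np: "norm p' \<le> norm p + d" using h norm_triangle_sub[of p' p] by (simp add: dist_norm)
    have nX: "norm X' \<le> norm X + d" using h norm_triangle_sub[of X' X] by (simp add: dist_norm)
    have nq: "norm ((1 / norm p') *\<^sub>R p') \<le> 1" using h by simp
    have L0: "0 \<le> \<Lambda>" using assms(2)[rule_format, of 0] by linarith
    have a1: "\<bar>a ((1/e) *\<^sub>R x')\<bar> \<le> \<Lambda>" using assms(2)[rule_format, of "(1/e) *\<^sub>R x'"] by simp
    have T: "\<bar>trace ((mat 1 - outer ((1 / norm p') *\<^sub>R p')) ** X')\<bar> \<le> 8 * (norm X + d)"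
    proof -
      have "8 * norm X' \<le> 8 * (norm X + d)" using nX by simp
      then show ?thesis using trace_bound[OF nq, of X'] by linarith
    qed
    have g: "\<bar>grad a ((1/e) *\<^sub>R x') \<bullet> p'\<bar> \<le> \<bar>B\<bar> * (norm p + d)"
    proof -
      have "\<bar>grad a ((1/e) *\<^sub>R x') \<bullet> p'\<bar> \<le> norm (grad a ((1/e) *\<^sub>R x')) * norm p'"
        by (rule Cauchy_Schwarz_ineq2)
      also have "\<dots> \<le> \<bar>B\<bar> * (norm p + d)"
        using B[of x'] h np by (intro mult_mono) (auto simp: dist_commute)
      finally show ?thesis .
    qed
    have "\<bar>Gop a e F x' p' X'\<bar> \<le> \<bar>a ((1/e) *\<^sub>R x')\<bar> * \<bar>trace ((mat 1 - outer ((1 / norm p') *\<^sub>R p')) ** X')\<bar>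
        + \<bar>1/e\<bar> * \<bar>grad a ((1/e) *\<^sub>R x') \<bullet> p'\<bar> + \<bar>1/e\<bar> * \<bar>F\<bar> * norm p'"
      unfolding Gop_def using tri3[of "a ((1/e) *\<^sub>R x') * trace ((mat 1 - outer ((1 / norm p') *\<^sub>R p')) ** X')"
         "1/e * (grad a ((1/e) *\<^sub>R x') \<bullet> p')" "1/e * F * norm p'"]
      by (simp only: abs_mult abs_norm_cancel)
    also have "\<dots> \<le> C"
    proof -
      have h1: "\<bar>a ((1/e) *\<^sub>R x')\<bar> * \<bar>trace ((mat 1 - outer ((1 / norm p') *\<^sub>R p')) ** X')\<bar> \<le> \<Lambda> * (8 * (norm X + d))"
        by (rule mult_mono[OF a1 T L0 abs_ge_zero])
      have h2: "\<bar>1/e\<bar> * \<bar>grad a ((1/e) *\<^sub>R x') \<bullet> p'\<bar> \<le> \<bar>1/e\<bar> * (\<bar>B\<bar> * (norm p + d))"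
        by (rule mult_left_mono[OF g abs_ge_zero])
      have h3: "\<bar>1/e\<bar> * \<bar>F\<bar> * norm p' \<le> \<bar>1/e\<bar> * \<bar>F\<bar> * (norm p + d)"
        by (rule mult_left_mono[OF np]) simp
      show ?thesis unfolding C_def using h1 h2 h3 by linarith
    qed
    finally show "\<bar>Gop a e F x' p' X'\<bar> \<le> C" .
  qed
qed

definition nb :: "(real^2 \<Rightarrow> real^2 \<Rightarrow> real^2^2 \<Rightarrow> real) \<Rightarrow> real^2 \<Rightarrow> real^2 \<Rightarrow> real^2^2 \<Rightarrow> real \<Rightarrow> real set" where
  "nb g x p X d = {g x' p' X' | x' p' X'. p' \<noteq> 0 \<and> dist x' x < d \<and> dist p' p < d \<and> dist X' X < d}"

lemma env_up_nb: "env_up g x p X = Inf {Sup (nb g x p X d) | d. d > 0}"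
  by (simp add: env_up_def nb_def)

lemma env_low_nb: "env_low g x p X = Sup {Inf (nb g x p X d) | d. d > 0}"
  by (simp add: env_low_def nb_def)

lemma nb_nonempty:
  assumes "d > 0" shows "nb g x p X d \<noteq> {}"
proof -
  define p' where "p' = (if p \<noteq> 0 then p else (d/2) *\<^sub>R axis 1 1)"
  have "p' \<noteq> 0" using assms by (simp add: p'_def axis_def vec_eq_iff)
  moreover have "dist p' p < d" using assms by (auto simp: p'_def dist_norm)
  ultimately have "g x p' X \<in> nb g x p X d" using assms unfolding nb_def by force
  then show ?thesis by blast
qed

lemma nb_mono: "d \<le> d' \<Longrightarrow> nb g x p X d \<subseteq> nb g x p X d'"
  unfolding nb_def by fastforce

lemma nb_bdd:
  assumes "smooth_fun a" "\<forall>x. 1 \<le> a x \<and> a x \<le> \<Lambda>"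
  shows "bdd_above (nb (Gop a e F) x p X d)" "bdd_below (nb (Gop a e F) x p X d)"
proof -
  obtain C where C: "\<forall>x' p' X'. p' \<noteq> 0 \<and> dist x' x < d \<and> dist p' p < d \<and> dist X' X < d
           \<longrightarrow> \<bar>Gop a e F x' p' X'\<bar> \<le> C"
    using Gop_locbdd[OF assms, of x d p X e F] by blast
  have "\<forall>t\<in>nb (Gop a e F) x p X d. \<bar>t\<bar> \<le> C" using C unfolding nb_def by blast
  then show "bdd_above (nb (Gop a e F) x p X d)" "bdd_below (nb (Gop a e F) x p X d)"
    unfolding bdd_above_def bdd_below_def by (metis abs_le_D1 abs_le_D2 minus_le_iff)+
qed

lemma env_sets_bdd:
  assumes "smooth_fun a" "\<forall>x. 1 \<le> a x \<and> a x \<le> \<Lambda>"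
  shows "bdd_below {Sup (nb (Gop a e F) x p X d) | d. d > 0}"
        "bdd_above {Inf (nb (Gop a e F) x p X d) | d. d > 0}"
proof -
  obtain C where C: "\<forall>x' p' X'. p' \<noteq> 0 \<and> dist x' x < 1 \<and> dist p' p < 1 \<and> dist X' X < 1
           \<longrightarrow> \<bar>Gop a e F x' p' X'\<bar> \<le> C"
    using Gop_locbdd[OF assms, of x 1 p X e F] by blast
  have C1: "\<forall>t\<in>nb (Gop a e F) x p X 1. \<bar>t\<bar> \<le> C" using C unfolding nb_def by blast
  have ex: "\<exists>t. t \<in> nb (Gop a e F) x p X d \<and> \<bar>t\<bar> \<le> C" if "d > 0" for d
  proof -
    have "nb (Gop a e F) x p X (min d 1) \<noteq> {}" using nb_nonempty that by simp
    then obtain t where "t \<in> nb (Gop a e F) x p X (min d 1)" by blast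
    moreover have "nb (Gop a e F) x p X (min d 1) \<subseteq> nb (Gop a e F) x p X d"
      by (rule nb_mono) simp
    moreover have "nb (Gop a e F) x p X (min d 1) \<subseteq> nb (Gop a e F) x p X 1"
      by (rule nb_mono) simp
    ultimately show ?thesis using C1 by blast
  qed
  have 1: "Sup (nb (Gop a e F) x p X d) \<ge> -C" "Inf (nb (Gop a e F) x p X d) \<le> C" if dpos: "d > 0" for d
  proof -
    obtain t where t: "t \<in> nb (Gop a e F) x p X d" "\<bar>t\<bar> \<le> C" using ex[OF dpos] by blast
    have "t \<le> Sup (nb (Gop a e F) x p X d)" using t(1) nb_bdd[OF assms] by (intro cSup_upper)
    then show "Sup (nb (Gop a e F) x p X d) \<ge> -C" using t(2) by linarith
    have "Inf (nb (Gop a e F) x p X d) \<le> t" using t(1) nb_bdd[OF assms] by (intro cInf_lower)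
    then show "Inf (nb (Gop a e F) x p X d) \<le> C" using t(2) by linarith
  qed
  show "bdd_below {Sup (nb (Gop a e F) x p X d) | d. d > 0}"
    unfolding bdd_below_def using 1(1) by blast
  show "bdd_above {Inf (nb (Gop a e F) x p X d) | d. d > 0}"
    unfolding bdd_above_def using 1(2) by blast
qed

lemma nb_scale:
  assumes "periodic2 a" "intvec k" "e > 0" "d > 0"
    and "t \<in> nb (Gop a 1 F) ((1/e) *\<^sub>R x0 + k) p (e *\<^sub>R X) (min e (1/e) * d)"
  shows "\<exists>s\<in>nb (Gop a e F) x0 p X d. t = e * s"
proof -
  define m where "m = min e (1/e)"
  have m1: "m \<le> 1"
  proof (cases "e \<le> 1")
    case True then show ?thesis unfolding m_def by simp
  next
    case False then have "1/e \<le> 1" by simp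
    then show ?thesis unfolding m_def by simp
  qed
  have me: "m \<le> e" "m \<le> 1/e" "m > 0" unfolding m_def using assms(3) by auto
  obtain y' p' Y' where t: "t = Gop a 1 F y' p' Y'" and h: "p' \<noteq> 0"
    "dist y' ((1/e) *\<^sub>R x0 + k) < m * d" "dist p' p < m * d" "dist Y' (e *\<^sub>R X) < m * d"
    using assms(5) unfolding nb_def m_def by blast
  define x' where "x' = e *\<^sub>R (y' - k)"
  define X' where "X' = (1/e) *\<^sub>R Y'"
  have "x' - x0 = e *\<^sub>R (y' - ((1/e) *\<^sub>R x0 + k))" using assms(3) by (simp add: x'_def algebra_simps)
  then have "dist x' x0 = e * dist y' ((1/e) *\<^sub>R x0 + k)" using assms(3) by (simp add: dist_norm)
  have "dist x' x0 < d"
  proof -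
    have "dist x' x0 = e * dist y' ((1/e) *\<^sub>R x0 + k)" by fact
    also have "\<dots> < e * (m * d)" using h(2) assms(3) by simp
    also have "\<dots> \<le> d"
    proof -
      have "e * m \<le> e * (1/e)" using me(2) assms(3) by (intro mult_left_mono) auto
      then have "e * m \<le> 1" using assms(3) by simp
      then show ?thesis using mult_right_mono[of "e * m" 1 d] assms(4) by (simp add: mult.assoc)
    qed
    finally show ?thesis .
  qed
  moreover have "dist X' X < d"
  proof -
    have "X' - X = (1/e) *\<^sub>R (Y' - e *\<^sub>R X)" using assms(3) by (simp add: X'_def algebra_simps)
    then have "dist X' X = (1/e) * dist Y' (e *\<^sub>R X)" using assms(3) by (simp add: dist_norm)
    also have "\<dots> < (1/e) * (m * d)" using h(4) assms(3) by (intro mult_strict_left_mono) auto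
    also have "\<dots> \<le> (1/e) * (e * d)" using me assms by (intro mult_left_mono mult_right_mono) auto
    finally show ?thesis using assms(3) by simp
  qed
  moreover have "dist p' p < d" using h(3) m1 assms(4)
    using mult_right_mono[OF m1, of d] by linarith
  ultimately have s: "Gop a e F x' p' X' \<in> nb (Gop a e F) x0 p X d" using h(1) unfolding nb_def by blast
  have "e * Gop a e F x' p' X' = Gop a 1 F ((1/e) *\<^sub>R x' + k) p' (e *\<^sub>R X')"
    by (rule Gop_scale[OF assms(1-3)])
  also have "\<dots> = t" using assms(3) by (simp add: t x'_def X'_def)
  finally show ?thesis using s by metis
qed

lemma env_up_scale:
  assumes "periodic2 a" "intvec k" "e > 0" "smooth_fun a" "\<forall>x. 1 \<le> a x \<and> a x \<le> \<Lambda>"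
  shows "(1/e) * env_up (Gop a 1 F) ((1/e) *\<^sub>R x0 + k) p (e *\<^sub>R X) \<le> env_up (Gop a e F) x0 p X"
proof -
  let ?y0 = "(1/e) *\<^sub>R x0 + k"
  have "(1/e) * env_up (Gop a 1 F) ?y0 p (e *\<^sub>R X) \<le> Sup (nb (Gop a e F) x0 p X d)" if d: "d > 0" for d
  proof -
    define m where "m = min e (1/e)"
    have md: "m * d > 0" using d assms(3) by (simp add: m_def)
    have "env_up (Gop a 1 F) ?y0 p (e *\<^sub>R X) \<le> Sup (nb (Gop a 1 F) ?y0 p (e *\<^sub>R X) (m * d))"
      unfolding env_up_nb using md env_sets_bdd(1)[OF assms(4,5)] by (intro cInf_lower) auto
    also have "\<dots> \<le> e * Sup (nb (Gop a e F) x0 p X d)"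
    proof (rule cSup_least)
      show "nb (Gop a 1 F) ?y0 p (e *\<^sub>R X) (m * d) \<noteq> {}" using nb_nonempty md by blast
      fix t assume "t \<in> nb (Gop a 1 F) ?y0 p (e *\<^sub>R X) (m * d)"
      then obtain s where s: "s \<in> nb (Gop a e F) x0 p X d" "t = e * s"
        using nb_scale[OF assms(1-3) d] unfolding m_def by blast
      have "s \<le> Sup (nb (Gop a e F) x0 p X d)" using s(1) nb_bdd[OF assms(4,5)] by (intro cSup_upper)
      then show "t \<le> e * Sup (nb (Gop a e F) x0 p X d)" using s(2) assms(3) by simp
    qed
    finally show ?thesis using assms(3) by (simp add: field_simps)
  qed
  then show ?thesis unfolding env_up_nb[of "Gop a e F"]
    by (intro cInf_greatest) (auto intro: exI[of _ 1])
qed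

lemma env_low_scale:
  assumes "periodic2 a" "intvec k" "e > 0" "smooth_fun a" "\<forall>x. 1 \<le> a x \<and> a x \<le> \<Lambda>"
  shows "env_low (Gop a e F) x0 p X \<le> (1/e) * env_low (Gop a 1 F) ((1/e) *\<^sub>R x0 + k) p (e *\<^sub>R X)"
proof -
  let ?y0 = "(1/e) *\<^sub>R x0 + k"
  have "Inf (nb (Gop a e F) x0 p X d) \<le> (1/e) * env_low (Gop a 1 F) ?y0 p (e *\<^sub>R X)" if d: "d > 0" for d
  proof -
    define m where "m = min e (1/e)"
    have md: "m * d > 0" using d assms(3) by (simp add: m_def)
    have "e * Inf (nb (Gop a e F) x0 p X d) \<le> Inf (nb (Gop a 1 F) ?y0 p (e *\<^sub>R X) (m * d))"
    proof (rule cInf_greatest)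
      show "nb (Gop a 1 F) ?y0 p (e *\<^sub>R X) (m * d) \<noteq> {}" using nb_nonempty md by blast
      fix t assume "t \<in> nb (Gop a 1 F) ?y0 p (e *\<^sub>R X) (m * d)"
      then obtain s where s: "s \<in> nb (Gop a e F) x0 p X d" "t = e * s"
        using nb_scale[OF assms(1-3) d] unfolding m_def by blast
      have "Inf (nb (Gop a e F) x0 p X d) \<le> s" using s(1) nb_bdd[OF assms(4,5)] by (intro cInf_lower)
      then show "e * Inf (nb (Gop a e F) x0 p X d) \<le> t" using s(2) assms(3) by simp
    qed
    also have "\<dots> \<le> env_low (Gop a 1 F) ?y0 p (e *\<^sub>R X)"
      unfolding env_low_nb using md env_sets_bdd(2)[OF assms(4,5)] by (intro cSup_upper) auto
    finally show ?thesis using assms(3) by (simp add: field_simps)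
  qed
  then show ?thesis unfolding env_low_nb[of "Gop a e F"]
    by (intro cSup_least) (auto intro: exI[of _ 1])
qed

lemma test_fun_scale:
  fixes k :: "real^2"
  assumes tf: "test_fun \<phi> \<phi>x \<phi>t \<phi>xx \<phi>xt" and e: "e > 0"
  defines "L \<equiv> (\<lambda>z::(real^2) \<times> real. (e *\<^sub>R (fst z - k), e * e * snd z))"
  shows "test_fun (\<lambda>z. (1/e) * \<phi> (L z)) (\<lambda>z. \<phi>x (L z)) (\<lambda>z. e * \<phi>t (L z))
           (\<lambda>z. e *\<^sub>R \<phi>xx (L z)) (\<lambda>z. (e * e) *\<^sub>R \<phi>xt (L z))"
proof -
  have dL: "(L has_derivative (\<lambda>h. (e *\<^sub>R fst h, e * e * snd h))) (at z)" for z
    unfolding L_def by (auto intro!: derivative_eq_intros)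
  have cL: "continuous_on UNIV L" unfolding L_def by (intro continuous_intros)
  from tf have d1: "\<And>z. (\<phi> has_derivative (\<lambda>(h, s). \<phi>x z \<bullet> h + \<phi>t z * s)) (at z)"
    and d2: "\<And>z. (\<phi>x has_derivative (\<lambda>(h, s). \<phi>xx z *v h + s *\<^sub>R \<phi>xt z)) (at z)"
    and c1: "continuous_on UNIV \<phi>t" and c2: "continuous_on UNIV \<phi>xx" and c3: "continuous_on UNIV \<phi>xt"
    unfolding test_fun_def by auto
  have D1: "((\<lambda>z. (1/e) * \<phi> (L z)) has_derivative (\<lambda>(h, s). \<phi>x (L z) \<bullet> h + e * \<phi>t (L z) * s)) (at z)" for z
  proof -
    have "((\<lambda>z. \<phi> (L z)) has_derivative (\<lambda>w. (\<lambda>(h, s). \<phi>x (L z) \<bullet> h + \<phi>t (L z) * s) (e *\<^sub>R fst w, e * e * snd w))) (at z)"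
      by (rule has_derivative_compose[OF dL d1])
    then have "((\<lambda>z. (1/e) * \<phi> (L z)) has_derivative (\<lambda>w. (1/e) * ((\<lambda>(h, s). \<phi>x (L z) \<bullet> h + \<phi>t (L z) * s) (e *\<^sub>R fst w, e * e * snd w)))) (at z)"
      by (rule has_derivative_mult_right)
    then show ?thesis
      by (rule has_derivative_eq_rhs) (use e in \<open>auto simp: field_simps fun_eq_iff\<close>)
  qed
  have D2: "((\<lambda>z. \<phi>x (L z)) has_derivative (\<lambda>(h, s). (e *\<^sub>R \<phi>xx (L z)) *v h + s *\<^sub>R ((e * e) *\<^sub>R \<phi>xt (L z)))) (at z)" for z
  proof -
    have "((\<lambda>z. \<phi>x (L z)) has_derivative (\<lambda>w. (\<lambda>(h, s). \<phi>xx (L z) *v h + s *\<^sub>R \<phi>xt (L z)) (e *\<^sub>R fst w, e * e * snd w))) (at z)"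
      by (rule has_derivative_compose[OF dL d2])
    then show ?thesis
      by (rule has_derivative_eq_rhs)
        (auto simp: fun_eq_iff matrix_vector_mult_scaleR scaleR_matrix_vector_assoc[symmetric])
  qed
  have C1: "continuous_on UNIV (\<lambda>z. e * \<phi>t (L z))"
    by (intro continuous_intros continuous_on_compose2[OF c1 cL]) auto
  have C2: "continuous_on UNIV (\<lambda>z. e *\<^sub>R \<phi>xx (L z))"
    by (intro continuous_intros continuous_on_compose2[OF c2 cL]) auto
  have C3: "continuous_on UNIV (\<lambda>z. (e * e) *\<^sub>R \<phi>xt (L z))"
    by (intro continuous_intros continuous_on_compose2[OF c3 cL]) auto
  show ?thesis unfolding test_fun_def using D1 D2 C1 C2 C3 by blast
qed

lemma dist_scale:
  fixes y y0 k :: "real^2" and s s0 e :: real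
  assumes "e > 0"
  shows "dist (e *\<^sub>R (y - k), e * e * s) (e *\<^sub>R (y0 - k), e * e * s0) \<le> (e + e * e) * dist (y, s) (y0, s0)"
proof -
  have 1: "dist (e *\<^sub>R (y - k)) (e *\<^sub>R (y0 - k)) = e * dist y y0"
  proof -
    have yy: "(y - k) - (y0 - k) = y - y0" by simp
    have "e *\<^sub>R (y - k) - e *\<^sub>R (y0 - k) = e *\<^sub>R (y - y0)" by (simp only: scaleR_diff_right[symmetric] yy)
    then show ?thesis using assms by (simp add: dist_norm)
  qed
  have 2: "dist (e * e * s) (e * e * s0) = e * e * dist s s0"
    using assms by (simp add: dist_real_def abs_mult right_diff_distrib[symmetric])
  have ee: "e \<le> e + e * e" "e * e \<le> e + e * e" using assms by auto
  have "(e * dist y y0)\<^sup>2 + (e * e * dist s s0)\<^sup>2 \<le> ((e + e * e) * dist y y0)\<^sup>2 + ((e + e * e) * dist s s0)\<^sup>2"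
    using ee assms by (intro add_mono power_mono mult_right_mono) auto
  also have "\<dots> = (e + e * e)\<^sup>2 * ((dist y y0)\<^sup>2 + (dist s s0)\<^sup>2)"
    by (simp only: power_mult_distrib distrib_left)
  also have "\<dots> = ((e + e * e) * sqrt ((dist y y0)\<^sup>2 + (dist s s0)\<^sup>2))\<^sup>2"
    by (simp only: power_mult_distrib real_sqrt_pow2[OF add_nonneg_nonneg[OF zero_le_power2 zero_le_power2]])
  finally have "sqrt ((e * dist y y0)\<^sup>2 + (e * e * dist s s0)\<^sup>2) \<le> (e + e * e) * sqrt ((dist y y0)\<^sup>2 + (dist s s0)\<^sup>2)"
    using assms by (intro real_le_lsqrt) auto
  then show ?thesis by (simp add: dist_Pair_Pair 1 2)
qed

lemma visc_scale:
  fixes c :: real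
  assumes per: "periodic2 a" and kk: "intvec k" and e: "e > 0" and sm: "smooth_fun a"
    and ab: "\<forall>x. 1 \<le> a x \<and> a x \<le> \<Lambda>"
  defines "U \<equiv> (\<lambda>u z. e * u ((1/e) *\<^sub>R fst z + k, snd z / (e * e)) + c)"
  shows "visc_sub (Gop a 1 F) u \<Longrightarrow> visc_sub (Gop a e F) (U u)"
    and "visc_super (Gop a 1 F) u \<Longrightarrow> visc_super (Gop a e F) (U u)"
proof -
  define L where "L = (\<lambda>z::(real^2) \<times> real. (e *\<^sub>R (fst z - k), e * e * snd z))"
  have LU: "U u (L (y, s)) = e * u (y, s) + c" for u y s
    using e by (simp add: U_def L_def)
  have key: "\<exists>d'>0. \<forall>y s. s > 0 \<and> dist (y, s) ((1/e) *\<^sub>R x0 + k, t0 / (e * e)) < d' \<longrightarrow>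
      R (u (y, s) - (1/e) * \<phi> (L (y, s))) (u ((1/e) *\<^sub>R x0 + k, t0 / (e * e)) - (1/e) * \<phi> (L ((1/e) *\<^sub>R x0 + k, t0 / (e * e))))"
    if d: "d > 0" and loc: "\<forall>x t. t > 0 \<and> dist (x, t) (x0, t0) < d \<longrightarrow> R (U u (x, t) - \<phi> (x, t)) (U u (x0, t0) - \<phi> (x0, t0))"
      and Rsc: "\<And>A B. R (e * A + c) (e * B + c) \<Longrightarrow> R A B"
    for R :: "real \<Rightarrow> real \<Rightarrow> bool" and u d \<phi> x0 t0
  proof (intro exI[of _ "d / (e + e * e)"] conjI allI impI)
    show "d / (e + e * e) > 0" using d e by (intro divide_pos_pos add_pos_pos mult_pos_pos) auto
    fix y s assume ys: "0 < s \<and> dist (y, s) ((1/e) *\<^sub>R x0 + k, t0 / (e * e)) < d / (e + e * e)"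
    have L0: "L ((1/e) *\<^sub>R x0 + k, t0 / (e * e)) = (x0, t0)" using e by (simp add: L_def)
    have "dist (L (y, s)) (x0, t0) \<le> (e + e * e) * dist (y, s) ((1/e) *\<^sub>R x0 + k, t0 / (e * e))"
      using dist_scale[OF e, of y k s "(1/e) *\<^sub>R x0 + k" "t0 / (e * e)"] L0 by (simp add: L_def)
    also have "\<dots> < d"
    proof -
      have pe: "0 < e + e * e" using e by (simp add: add_pos_pos)
      from ys have "dist (y, s) ((1/e) *\<^sub>R x0 + k, t0 / (e * e)) < d / (e + e * e)" by simp
      then have "dist (y, s) ((1/e) *\<^sub>R x0 + k, t0 / (e * e)) * (e + e * e) < d"
        using pe by (simp only: pos_less_divide_eq)
      then show ?thesis by (metis mult.commute)
    qed
    finally have "dist (L (y, s)) (x0, t0) < d" .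
    moreover have "snd (L (y, s)) > 0" using ys e by (simp add: L_def)
    ultimately have "R (U u (L (y, s)) - \<phi> (L (y, s))) (U u (x0, t0) - \<phi> (x0, t0))"
      using loc[rule_format, of "snd (L (y, s))" "fst (L (y, s))"] by simp
    moreover have "U u (x0, t0) = e * u ((1/e) *\<^sub>R x0 + k, t0 / (e * e)) + c" by (simp add: U_def)
    ultimately have "R ((e * u (y, s) + c) - \<phi> (L (y, s))) ((e * u ((1/e) *\<^sub>R x0 + k, t0 / (e * e)) + c) - \<phi> (x0, t0))"
      using LU by simp
    moreover have "e * u (y, s) + c - \<phi> (L (y, s)) = e * (u (y, s) - (1/e) * \<phi> (L (y, s))) + c"
      using e by (simp add: right_diff_distrib)
    moreover have "e * u ((1/e) *\<^sub>R x0 + k, t0 / (e * e)) + c - \<phi> (x0, t0) = e * (u ((1/e) *\<^sub>R x0 + k, t0 / (e * e)) - (1/e) * \<phi> (x0, t0)) + c"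
      using e by (simp add: right_diff_distrib)
    ultimately have "R (e * (u (y, s) - (1/e) * \<phi> (L (y, s))) + c) (e * (u ((1/e) *\<^sub>R x0 + k, t0 / (e * e)) - (1/e) * \<phi> (x0, t0)) + c)"
      by (simp only:)
    then show "R (u (y, s) - (1/e) * \<phi> (L (y, s))) (u ((1/e) *\<^sub>R x0 + k, t0 / (e * e)) - (1/e) * \<phi> (L ((1/e) *\<^sub>R x0 + k, t0 / (e * e))))"
      using L0 Rsc by simp
  qed
  show "visc_sub (Gop a e F) (U u)" if sub: "visc_sub (Gop a 1 F) u"
    unfolding visc_sub_def
  proof (intro allI impI, elim conjE exE)
    fix \<phi> \<phi>x \<phi>t \<phi>xx \<phi>xt x0 t0 d
    assume tf: "test_fun \<phi> \<phi>x \<phi>t \<phi>xx \<phi>xt" and t0: "0 < t0" and d: "d > 0"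
      and loc: "\<forall>x t. 0 < t \<and> dist (x, t) (x0, t0) < d \<longrightarrow> U u (x, t) - \<phi> (x, t) \<le> U u (x0, t0) - \<phi> (x0, t0)"
    let ?y0 = "(1/e) *\<^sub>R x0 + k" and ?s0 = "t0 / (e * e)"
    have L0: "L (?y0, ?s0) = (x0, t0)" using e by (simp add: L_def)
    have tf2: "test_fun (\<lambda>z. (1/e) * \<phi> (L z)) (\<lambda>z. \<phi>x (L z)) (\<lambda>z. e * \<phi>t (L z))
           (\<lambda>z. e *\<^sub>R \<phi>xx (L z)) (\<lambda>z. (e * e) *\<^sub>R \<phi>xt (L z))"
      unfolding L_def by (rule test_fun_scale[OF tf e])
    have "\<exists>d'>0. \<forall>y s. s > 0 \<and> dist (y, s) (?y0, ?s0) < d' \<longrightarrow>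
      (u (y, s) - (1/e) * \<phi> (L (y, s))) \<le> (u (?y0, ?s0) - (1/e) * \<phi> (L (?y0, ?s0)))"
      by (rule key[where R="(\<le>)", OF d loc]) (use e in simp)
    note lm = this
    have s0pos: "?s0 > 0" using t0 e by simp
    have S: "e * \<phi>t (L (?y0, ?s0)) \<le> env_up (Gop a 1 F) ?y0 (\<phi>x (L (?y0, ?s0))) (e *\<^sub>R \<phi>xx (L (?y0, ?s0)))"
      by (rule sub[unfolded visc_sub_def, rule_format, OF conjI[OF tf2 conjI[OF s0pos lm]]])
    then have S2: "e * \<phi>t (x0, t0) \<le> env_up (Gop a 1 F) ?y0 (\<phi>x (x0, t0)) (e *\<^sub>R \<phi>xx (x0, t0))"
      unfolding L0 .
    have "(1/e) * (e * \<phi>t (x0, t0)) \<le> (1/e) * env_up (Gop a 1 F) ?y0 (\<phi>x (x0, t0)) (e *\<^sub>R \<phi>xx (x0, t0))"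
      using S2 e by (intro mult_left_mono) auto
    then have "\<phi>t (x0, t0) \<le> (1/e) * env_up (Gop a 1 F) ?y0 (\<phi>x (x0, t0)) (e *\<^sub>R \<phi>xx (x0, t0))"
      using e by simp
    also have "\<dots> \<le> env_up (Gop a e F) x0 (\<phi>x (x0, t0)) (\<phi>xx (x0, t0))"
      by (rule env_up_scale[OF per kk e sm ab])
    finally show "\<phi>t (x0, t0) \<le> env_up (Gop a e F) x0 (\<phi>x (x0, t0)) (\<phi>xx (x0, t0))" .
  qed
  show "visc_super (Gop a e F) (U u)" if sup: "visc_super (Gop a 1 F) u"
    unfolding visc_super_def
  proof (intro allI impI, elim conjE exE)
    fix \<phi> \<phi>x \<phi>t \<phi>xx \<phi>xt x0 t0 d
    assume tf: "test_fun \<phi> \<phi>x \<phi>t \<phi>xx \<phi>xt" and t0: "0 < t0" and d: "d > 0"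
      and loc: "\<forall>x t. 0 < t \<and> dist (x, t) (x0, t0) < d \<longrightarrow> U u (x, t) - \<phi> (x, t) \<ge> U u (x0, t0) - \<phi> (x0, t0)"
    let ?y0 = "(1/e) *\<^sub>R x0 + k" and ?s0 = "t0 / (e * e)"
    have L0: "L (?y0, ?s0) = (x0, t0)" using e by (simp add: L_def)
    have tf2: "test_fun (\<lambda>z. (1/e) * \<phi> (L z)) (\<lambda>z. \<phi>x (L z)) (\<lambda>z. e * \<phi>t (L z))
           (\<lambda>z. e *\<^sub>R \<phi>xx (L z)) (\<lambda>z. (e * e) *\<^sub>R \<phi>xt (L z))"
      unfolding L_def by (rule test_fun_scale[OF tf e])
    have loc': "\<forall>x t. t > 0 \<and> dist (x, t) (x0, t0) < d \<longrightarrow> (\<lambda>A B. A \<ge> B) (U u (x, t) - \<phi> (x, t)) (U u (x0, t0) - \<phi> (x0, t0))"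
      using loc by simp
    have "\<exists>d'>0. \<forall>y s. s > 0 \<and> dist (y, s) (?y0, ?s0) < d' \<longrightarrow>
      (\<lambda>A B. A \<ge> B) (u (y, s) - (1/e) * \<phi> (L (y, s))) (u (?y0, ?s0) - (1/e) * \<phi> (L (?y0, ?s0)))"
      by (rule key[where R="\<lambda>A B. A \<ge> B", OF d loc']) (use e in simp)
    then have "\<exists>d'>0. \<forall>y s. s > 0 \<and> dist (y, s) (?y0, ?s0) < d' \<longrightarrow>
      (u (y, s) - (1/e) * \<phi> (L (y, s))) \<ge> (u (?y0, ?s0) - (1/e) * \<phi> (L (?y0, ?s0)))"
      by simp
    note lm = this
    have s0pos: "?s0 > 0" using t0 e by simp
    have S: "e * \<phi>t (L (?y0, ?s0)) \<ge> env_low (Gop a 1 F) ?y0 (\<phi>x (L (?y0, ?s0))) (e *\<^sub>R \<phi>xx (L (?y0, ?s0)))"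
      by (rule sup[unfolded visc_super_def, rule_format, OF conjI[OF tf2 conjI[OF s0pos lm]]])
    then have S2: "e * \<phi>t (x0, t0) \<ge> env_low (Gop a 1 F) ?y0 (\<phi>x (x0, t0)) (e *\<^sub>R \<phi>xx (x0, t0))"
      unfolding L0 .
    have "(1/e) * (e * \<phi>t (x0, t0)) \<ge> (1/e) * env_low (Gop a 1 F) ?y0 (\<phi>x (x0, t0)) (e *\<^sub>R \<phi>xx (x0, t0))"
      using S2 e by (intro mult_left_mono) auto
    then have "\<phi>t (x0, t0) \<ge> (1/e) * env_low (Gop a 1 F) ?y0 (\<phi>x (x0, t0)) (e *\<^sub>R \<phi>xx (x0, t0))"
      using e by simp
    moreover have "env_low (Gop a e F) x0 (\<phi>x (x0, t0)) (\<phi>xx (x0, t0)) \<le> (1/e) * env_low (Gop a 1 F) ?y0 (\<phi>x (x0, t0)) (e *\<^sub>R \<phi>xx (x0, t0))"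
      by (rule env_low_scale[OF per kk e sm ab])
    ultimately show "\<phi>t (x0, t0) \<ge> env_low (Gop a e F) x0 (\<phi>x (x0, t0)) (\<phi>xx (x0, t0))" by linarith
  qed
qed

lemma uc_subset:
  fixes f :: "'a::metric_space \<Rightarrow> 'b::metric_space"
  shows "uniformly_continuous_on T f \<Longrightarrow> S \<subseteq> T \<Longrightarrow> uniformly_continuous_on S f"
  unfolding uniformly_continuous_on_def by (meson subsetD)

lemma sol_scale:
  assumes per: "periodic2 a" and kk: "intvec k" and e: "e > 0" and sm: "smooth_fun a"
    and ab: "\<forall>x. 1 \<le> a x \<and> a x \<le> \<Lambda>"
    and sol: "visc_sol_ivp (Gop a 1 F) (\<lambda>x. - (x \<bullet> n)) u"
  shows "visc_sol_ivp (Gop a e F) (\<lambda>x. - (x \<bullet> n))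
           (\<lambda>z. e * u ((1/e) *\<^sub>R fst z + k, snd z / (e * e)) + e * (k \<bullet> n))"
proof -
  have uc: "\<forall>T>0. uniformly_continuous_on {z. 0 \<le> snd z \<and> snd z \<le> T} u"
    and init: "\<forall>x. u (x, 0) = - (x \<bullet> n)"
    and sub: "visc_sub (Gop a 1 F) u" and sup: "visc_super (Gop a 1 F) u"
    using sol unfolding visc_sol_ivp_def by auto
  define M where "M = (\<lambda>z::(real^2) \<times> real. ((1/e) *\<^sub>R fst z + k, snd z / (e * e)))"
  have linM: "bounded_linear (\<lambda>z::(real^2) \<times> real. ((1/e) *\<^sub>R fst z, snd z / (e * e)))"
    by (intro bounded_linear_Pair bounded_linear_compose[OF bounded_linear_scaleR_right bounded_linear_fst]
        bounded_linear_compose[OF bounded_linear_divide bounded_linear_snd])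
  have ucM: "uniformly_continuous_on S M" for S
  proof -
    have "uniformly_continuous_on S (\<lambda>z. ((1/e) *\<^sub>R fst z, snd z / (e * e)) + (k, 0::real))"
      by (intro uniformly_continuous_on_add uniformly_continuous_on_const
          bounded_linear.uniformly_continuous_on[OF linM] uniformly_continuous_on_id)
    moreover have "(\<lambda>z. ((1/e) *\<^sub>R fst z, snd z / (e * e)) + (k, 0::real)) = M"
      by (auto simp: M_def fun_eq_iff)
    ultimately show ?thesis by simp
  qed
  have "uniformly_continuous_on {z. 0 \<le> snd z \<and> snd z \<le> T} (\<lambda>z. e * u ((1/e) *\<^sub>R fst z + k, snd z / (e * e)) + e * (k \<bullet> n))"
    if T: "T > 0" for T
  proof -
    have "uniformly_continuous_on {z. 0 \<le> snd z \<and> snd z \<le> T / (e * e)} u" using uc T e by simp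
    moreover have "M ` {z. 0 \<le> snd z \<and> snd z \<le> T} \<subseteq> {z. 0 \<le> snd z \<and> snd z \<le> T / (e * e)}"
      using e by (auto simp: M_def divide_right_mono)
    ultimately have "uniformly_continuous_on (M ` {z. 0 \<le> snd z \<and> snd z \<le> T}) u" by (rule uc_subset)
    then have "uniformly_continuous_on {z. 0 \<le> snd z \<and> snd z \<le> T} (\<lambda>z. u (M z))"
      by (rule uniformly_continuous_on_compose[OF ucM])
    then have "uniformly_continuous_on {z. 0 \<le> snd z \<and> snd z \<le> T} (\<lambda>z. e * u (M z) + e * (k \<bullet> n))"
      by (intro uniformly_continuous_on_add uniformly_continuous_on_const uniformly_continuous_on_cmul_left)
    then show ?thesis by (simp add: M_def)
  qed
  moreover have "e * u ((1/e) *\<^sub>R fst (x, 0::real) + k, snd (x, 0::real) / (e * e)) + e * (k \<bullet> n) = - (x \<bullet> n)" for x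
    using init e by (simp add: inner_add_left algebra_simps)
  moreover have "visc_sub (Gop a e F) (\<lambda>z. e * u ((1/e) *\<^sub>R fst z + k, snd z / (e * e)) + e * (k \<bullet> n))"
    using visc_scale(1)[OF per kk e sm ab sub] .
  moreover have "visc_super (Gop a e F) (\<lambda>z. e * u ((1/e) *\<^sub>R fst z + k, snd z / (e * e)) + e * (k \<bullet> n))"
    using visc_scale(2)[OF per kk e sm ab sup] .
  ultimately show ?thesis unfolding visc_sol_ivp_def by simp
qed

lemma front_lemma:
  assumes n: "norm n = 1" and eta: "\<eta> \<ge> 0" and bd: "\<forall>z. \<bar>u (z, s) + z \<bullet> n\<bar> \<le> \<eta>"
  shows "level_front u s \<noteq> {}" "\<forall>x\<in>level_front u s. \<bar>x \<bullet> n\<bar> \<le> \<eta>"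
proof -
  define A where "A = {x. 0 \<le> u (x, s)}"
  have nn: "n \<bullet> n = 1" using n by (simp add: power2_norm_eq_inner[symmetric])
  have "(- (\<eta> + 1)) *\<^sub>R n \<in> A"
  proof -
    have "\<bar>u ((- (\<eta> + 1)) *\<^sub>R n, s) - (\<eta> + 1)\<bar> \<le> \<eta>" using bd[rule_format, of "(- (\<eta> + 1)) *\<^sub>R n"] nn by simp
    then show ?thesis unfolding A_def by simp
  qed
  moreover have "(\<eta> + 1) *\<^sub>R n \<notin> A"
  proof -
    have "\<bar>u ((\<eta> + 1) *\<^sub>R n, s) + (\<eta> + 1)\<bar> \<le> \<eta>" using bd[rule_format, of "(\<eta> + 1) *\<^sub>R n"] nn by simp
    then show ?thesis unfolding A_def by simp
  qed
  ultimately have "frontier A \<noteq> {}" by (intro frontier_not_empty) auto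
  then show "level_front u s \<noteq> {}" by (simp add: level_front_def A_def)
  have A1: "A \<subseteq> {x. x \<bullet> n \<le> \<eta>}"
  proof
    fix x assume "x \<in> A"
    then have "0 \<le> u (x, s)" by (simp add: A_def)
    moreover have "\<bar>u (x, s) + x \<bullet> n\<bar> \<le> \<eta>" using bd by blast
    ultimately show "x \<in> {x. x \<bullet> n \<le> \<eta>}" by simp
  qed
  have A2: "- A \<subseteq> {x. x \<bullet> n \<ge> - \<eta>}"
  proof
    fix x assume "x \<in> - A"
    then have "u (x, s) < 0" by (simp add: A_def)
    moreover have "\<bar>u (x, s) + x \<bullet> n\<bar> \<le> \<eta>" using bd by blast
    ultimately show "x \<in> {x. x \<bullet> n \<ge> - \<eta>}" by simp
  qed
  have c1: "closed {x::real^2. x \<bullet> n \<le> \<eta>}"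
    using closed_halfspace_le[of n \<eta>] by (simp add: inner_commute)
  have c2: "closed {x::real^2. x \<bullet> n \<ge> - \<eta>}"
    using closed_halfspace_ge[of "- \<eta>" n] by (simp add: inner_commute)
  have "closure A \<subseteq> {x. x \<bullet> n \<le> \<eta>}" by (rule closure_minimal[OF A1 c1])
  moreover have "closure (- A) \<subseteq> {x. x \<bullet> n \<ge> - \<eta>}" by (rule closure_minimal[OF A2 c2])
  ultimately show "\<forall>x\<in>level_front u s. \<bar>x \<bullet> n\<bar> \<le> \<eta>"
  proof (intro ballI)
    fix x assume "closure A \<subseteq> {x. x \<bullet> n \<le> \<eta>}" "closure (- A) \<subseteq> {x. x \<bullet> n \<ge> - \<eta>}"
      "x \<in> level_front u s"
    moreover have "level_front u s = closure A \<inter> closure (- A)"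
      unfolding level_front_def A_def frontier_closures ..
    ultimately have "x \<bullet> n \<le> \<eta>" "x \<bullet> n \<ge> - \<eta>" by blast+
    then show "\<bar>x \<bullet> n\<bar> \<le> \<eta>" by arith
  qed
qed

lemma set_bounds:
  fixes A :: "real set"
  assumes "A \<noteq> {}" "\<forall>x\<in>A. \<bar>x\<bar> \<le> \<eta>"
  shows "bdd_below A" "bdd_above A" "\<bar>Inf A\<bar> \<le> \<eta>" "\<bar>Sup A\<bar> \<le> \<eta>"
proof -
  show bb: "bdd_below A" unfolding bdd_below_def using assms(2) by (metis abs_le_D2 minus_le_iff)
  show ba: "bdd_above A" unfolding bdd_above_def using assms(2) by (metis abs_le_D1)
  obtain x where x: "x \<in> A" using assms(1) by blast
  have "Inf A \<le> x" by (rule cInf_lower[OF x bb])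
  moreover have "- \<eta> \<le> Inf A" using assms by (intro cInf_greatest) (auto simp: abs_le_iff)
  moreover have "x \<le> \<eta>" using assms(2) x by fastforce
  ultimately show "\<bar>Inf A\<bar> \<le> \<eta>" by linarith
  have "x \<le> Sup A" by (rule cSup_upper[OF x ba])
  moreover have "Sup A \<le> \<eta>" using assms by (intro cSup_least) (auto simp: abs_le_iff)
  moreover have "- \<eta> \<le> x" using assms(2) x by fastforce
  ultimately show "\<bar>Sup A\<bar> \<le> \<eta>" by linarith
qed

theorem corollary1p5:
  fixes a :: "real^2 \<Rightarrow> real" and \<Lambda> Fa :: real
  assumes "\<Lambda> > 1"
    and "smooth_fun a" and "periodic2 a" and "\<forall>x. 1 \<le> a x \<and> a x \<le> \<Lambda>"
    and "Fa > 0"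
    and "\<forall>F u0 U. \<bar>F\<bar> < Fa \<and> uniformly_continuous_on UNIV u0 \<and>
           (\<forall>\<epsilon>>0. visc_sol_ivp (Gop a \<epsilon> F) u0 (U \<epsilon>)) \<longrightarrow>
           (\<forall>K. compact K \<and> K \<subseteq> {z. 0 \<le> snd z} \<longrightarrow>
              uniform_limit K U (\<lambda>z. u0 (fst z)) (at_right 0))"
  shows "\<forall>F n u. \<bar>F\<bar> < Fa \<and> norm n = 1 \<and> visc_sol_ivp (Gop a 1 F) (\<lambda>x. - (x \<bullet> n)) u \<longrightarrow>
           (\<forall>\<^sub>F t in at_top. level_front u t \<noteq> {} \<and>
               bdd_below ((\<lambda>x. x \<bullet> n) ` level_front u t) \<and>
               bdd_above ((\<lambda>x. x \<bullet> n) ` level_front u t)) \<and>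
           ((\<lambda>t. Inf ((\<lambda>x. x \<bullet> n) ` level_front u t) / t) \<longlongrightarrow> 0) at_top \<and>
           ((\<lambda>t. Sup ((\<lambda>x. x \<bullet> n) ` level_front u t) / t) \<longlongrightarrow> 0) at_top"
proof (intro allI impI, elim conjE)
  fix F n u
  assume F: "\<bar>F\<bar> < Fa" and nn: "norm n = 1" and sol: "visc_sol_ivp (Gop a 1 F) (\<lambda>x. - (x \<bullet> n)) u"
  have ucu0: "uniformly_continuous_on UNIV (\<lambda>x::real^2. - (x \<bullet> n))"
  proof -
    have "uniformly_continuous_on UNIV (\<lambda>x::real^2. x \<bullet> (- n))"
      by (rule bounded_linear.uniformly_continuous_on[OF bounded_linear_inner_left uniformly_continuous_on_id])
    then show ?thesis by simp
  qed
  define K0 where "K0 = cball (0::real^2) 2 \<times> {1::real}"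
  have K0c: "compact K0" unfolding K0_def by (intro compact_Times compact_cball) simp
  have K0s: "K0 \<subseteq> {z. 0 \<le> snd z}" unfolding K0_def by auto
  have claim: "\<exists>e0>0. \<forall>e k (x::real^2). 0 < e \<and> e < e0 \<and> intvec k \<and> norm x \<le> 2 \<longrightarrow>
      \<bar>e * u ((1/e) *\<^sub>R x + k, 1 / (e * e)) + e * (k \<bullet> n) + x \<bullet> n\<bar> < \<delta>" if \<delta>: "\<delta> > 0" for \<delta>
  proof -
    define Bad where "Bad = (\<lambda>e k. intvec k \<and> (\<exists>x::real^2. norm x \<le> 2 \<and>
       \<not> \<bar>e * u ((1/e) *\<^sub>R x + k, 1 / (e * e)) + e * (k \<bullet> n) + x \<bullet> n\<bar> < \<delta>))"
    define kk where "kk = (\<lambda>e. if (\<exists>k. Bad e k) then (SOME k. Bad e k) else 0)"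
    have kkB: "Bad e (kk e)" if "\<exists>k. Bad e k" for e
    proof -
      have "Bad e (SOME k. Bad e k)" using that by (rule someI_ex)
      then show ?thesis using that by (simp add: kk_def)
    qed
    have kki: "intvec (kk e)" for e
    proof (cases "\<exists>k. Bad e k")
      case True then show ?thesis using kkB[OF True] by (simp add: Bad_def)
    next
      case False
      have "kk e = 0" unfolding kk_def by (rule if_not_P[OF False])
      then show ?thesis by (simp add: intvec_def)
    qed
    define UU where "UU = (\<lambda>e z. e * u ((1/e) *\<^sub>R fst z + kk e, snd z / (e * e)) + e * (kk e \<bullet> n))"
    have solUU: "\<forall>e>0. visc_sol_ivp (Gop a e F) (\<lambda>x. - (x \<bullet> n)) (UU e)"
      unfolding UU_def using sol_scale[OF assms(3) kki _ assms(2) assms(4) sol] by blast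
    have "uniform_limit K0 UU (\<lambda>z. - (fst z \<bullet> n)) (at_right 0)"
      using assms(6)[rule_format, of F "\<lambda>x. - (x \<bullet> n)" UU K0] F ucu0 solUU K0c K0s by simp
    then have "\<forall>\<^sub>F e in at_right 0. \<forall>z\<in>K0. dist (UU e z) (- (fst z \<bullet> n)) < \<delta>"
      using \<delta> unfolding uniform_limit_iff by blast
    then obtain b where b: "b > 0" "\<And>e. 0 < e \<Longrightarrow> e < b \<Longrightarrow> \<forall>z\<in>K0. dist (UU e z) (- (fst z \<bullet> n)) < \<delta>"
      unfolding eventually_at_right_field by auto
    show ?thesis
    proof (intro exI[of _ b] conjI allI impI)
      show "b > 0" by fact
      fix e k and x :: "real^2" assume h: "0 < e \<and> e < b \<and> intvec k \<and> norm x \<le> 2"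
      show "\<bar>e * u ((1/e) *\<^sub>R x + k, 1 / (e * e)) + e * (k \<bullet> n) + x \<bullet> n\<bar> < \<delta>"
      proof (rule ccontr)
        assume "\<not> \<bar>e * u ((1/e) *\<^sub>R x + k, 1 / (e * e)) + e * (k \<bullet> n) + x \<bullet> n\<bar> < \<delta>"
        then have "Bad e k" using h unfolding Bad_def by blast
        then have "Bad e (kk e)" using kkB by blast
        then obtain x' where x': "norm x' \<le> 2"
          "\<not> \<bar>e * u ((1/e) *\<^sub>R x' + kk e, 1 / (e * e)) + e * (kk e \<bullet> n) + x' \<bullet> n\<bar> < \<delta>"
          unfolding Bad_def by blast
        have "(x', 1) \<in> K0" using x' unfolding K0_def by simp
        then have "dist (UU e (x', 1)) (- (fst (x', 1::real) \<bullet> n)) < \<delta>" using b(2)[of e] h by blast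
        then show False using x' by (simp add: UU_def dist_real_def)
      qed
    qed
  qed
  have bound: "\<exists>S. \<forall>s\<ge>S. \<forall>z. \<bar>u (z, s) + z \<bullet> n\<bar> \<le> \<delta> * s" if \<delta>: "\<delta> > 0" for \<delta>
  proof -
    obtain e0 where e0: "e0 > 0" "\<And>e k (x::real^2). 0 < e \<and> e < e0 \<and> intvec k \<and> norm x \<le> 2 \<Longrightarrow>
      \<bar>e * u ((1/e) *\<^sub>R x + k, 1 / (e * e)) + e * (k \<bullet> n) + x \<bullet> n\<bar> < \<delta>"
      using claim[OF \<delta>] by blast
    show ?thesis
    proof (intro exI[of _ "max 1 (1 / (e0 * e0)) + 1"] allI impI)
      fix s and z :: "real^2" assume s: "max 1 (1 / (e0 * e0)) + 1 \<le> s"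
      have s1: "s > 1" using s by simp
      have s2: "s > 1 / (e0 * e0)" using s by simp
      define e where "e = 1 / sqrt s"
      have sq: "sqrt s \<ge> 1" using s1 by simp
      have epos: "e > 0" using sq by (simp add: e_def)
      have ee: "1 / (e * e) = s" using s1 by (simp add: e_def)
      have "sqrt (1 / (e0 * e0)) = 1 / e0" using e0(1) by (simp add: real_sqrt_divide real_sqrt_mult_self)
      then have "1 / e0 < sqrt s" using s2 real_sqrt_less_mono by metis
      then have "1 < e0 * sqrt s" using e0(1) by (simp add: divide_less_eq mult.commute)
      then have elt: "e < e0" using sq by (simp add: e_def divide_less_eq mult.commute)
      have e1: "e \<le> 1" using sq by (simp add: e_def)
      define k where "k = (\<chi> i. (of_int \<lfloor>z $ i\<rfloor> :: real))"
      have ki: "intvec k" by (simp add: intvec_def k_def)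
      have comp: "\<bar>(z - k) $ i\<bar> \<le> 1" for i
        by (simp add: k_def) linarith
      have nzk: "norm (z - k) \<le> 2"
      proof -
        have "norm (z - k) \<le> (\<Sum>i\<in>UNIV. \<bar>(z - k) $ i\<bar>)" by (rule norm_le_l1_cart)
        also have "\<dots> = \<bar>(z - k) $ 1\<bar> + \<bar>(z - k) $ 2\<bar>" by (simp add: sum_2)
        also have "\<dots> \<le> 2" using comp[of 1] comp[of 2] by simp
        finally show ?thesis .
      qed
      define x where "x = e *\<^sub>R (z - k)"
      have nx: "norm x \<le> 2"
      proof -
        have "norm x = e * norm (z - k)" using epos by (simp add: x_def)
        also have "\<dots> \<le> 1 * 2" using e1 nzk epos by (intro mult_mono) auto
        finally show ?thesis by simp
      qed
      have zx: "(1/e) *\<^sub>R x + k = z" using epos by (simp add: x_def)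
      have "\<bar>e * u ((1/e) *\<^sub>R x + k, 1 / (e * e)) + e * (k \<bullet> n) + x \<bullet> n\<bar> < \<delta>"
        using e0(2) epos elt ki nx by blast
      then have "\<bar>e * u (z, s) + e * (k \<bullet> n) + x \<bullet> n\<bar> < \<delta>" by (simp only: zx ee)
      moreover have "e * u (z, s) + e * (k \<bullet> n) + x \<bullet> n = e * (u (z, s) + z \<bullet> n)"
        by (simp add: x_def inner_diff_left algebra_simps)
      ultimately have "e * \<bar>u (z, s) + z \<bullet> n\<bar> < \<delta>" using epos by (simp add: abs_mult)
      then have "\<bar>u (z, s) + z \<bullet> n\<bar> < \<delta> * sqrt s" using sq by (simp add: e_def field_simps)
      also have "\<dots> \<le> \<delta> * s"
      proof -
        have "sqrt s * 1 \<le> sqrt s * sqrt s" using sq by (intro mult_left_mono) auto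
        then have "sqrt s \<le> s" using s1 by simp
        then show ?thesis using \<delta> by simp
      qed
      finally show "\<bar>u (z, s) + z \<bullet> n\<bar> \<le> \<delta> * s" by simp
    qed
  qed
  define I where "I = (\<lambda>t. (\<lambda>x. x \<bullet> n) ` level_front u t)"
  have ev: "\<forall>\<^sub>F t in at_top. t \<ge> 1 \<and> I t \<noteq> {} \<and> (\<forall>y\<in>I t. \<bar>y\<bar> \<le> \<delta> * t)" if \<delta>: "\<delta> > 0" for \<delta>
  proof -
    obtain S where S: "\<And>s z. s \<ge> S \<Longrightarrow> \<bar>u (z, s) + z \<bullet> n\<bar> \<le> \<delta> * s" using bound[OF \<delta>] by blast
    show ?thesis unfolding eventually_at_top_linorder
    proof (intro exI[of _ "max S 1"] allI impI)
      fix t assume t: "t \<ge> max S 1"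
      have "\<forall>z. \<bar>u (z, t) + z \<bullet> n\<bar> \<le> \<delta> * t" using S t by simp
      moreover have "\<delta> * t \<ge> 0" using \<delta> t by simp
      ultimately have "level_front u t \<noteq> {}" "\<forall>x\<in>level_front u t. \<bar>x \<bullet> n\<bar> \<le> \<delta> * t"
        using front_lemma[OF nn] by blast+
      then show "t \<ge> 1 \<and> I t \<noteq> {} \<and> (\<forall>y\<in>I t. \<bar>y\<bar> \<le> \<delta> * t)" using t by (auto simp: I_def)
    qed
  qed
  have P1: "\<forall>\<^sub>F t in at_top. level_front u t \<noteq> {} \<and> bdd_below (I t) \<and> bdd_above (I t)"
    using ev[OF zero_less_one]
  proof eventually_elim
    case (elim t)
    then have ne: "I t \<noteq> {}" and bd: "\<forall>y\<in>I t. \<bar>y\<bar> \<le> 1 * t" by auto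
    have "level_front u t \<noteq> {}" using ne by (simp add: I_def)
    then show ?case using set_bounds(1,2)[OF ne bd] by simp
  qed
  have P2: "((\<lambda>t. Inf (I t) / t) \<longlongrightarrow> 0) at_top"
    unfolding tendsto_iff
  proof (intro allI impI)
    fix r :: real assume r: "r > 0"
    have "\<forall>\<^sub>F t in at_top. t \<ge> 1 \<and> I t \<noteq> {} \<and> (\<forall>y\<in>I t. \<bar>y\<bar> \<le> r / 2 * t)"
      using ev[of "r/2"] r by simp
    then show "\<forall>\<^sub>F t in at_top. dist (Inf (I t) / t) 0 < r"
    proof eventually_elim
      case (elim t)
      then have "\<bar>Inf (I t)\<bar> \<le> r / 2 * t" using set_bounds(3)[of "I t" "r/2*t"] by blast
      then have "\<bar>Inf (I t) / t\<bar> \<le> r / 2" using elim by (simp add: abs_div pos_divide_le_eq)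
      moreover have "dist (Inf (I t) / t) 0 = \<bar>Inf (I t) / t\<bar>" by (simp only: dist_real_def diff_zero)
      ultimately show ?case using r by linarith
    qed
  qed
  have P3: "((\<lambda>t. Sup (I t) / t) \<longlongrightarrow> 0) at_top"
    unfolding tendsto_iff
  proof (intro allI impI)
    fix r :: real assume r: "r > 0"
    have "\<forall>\<^sub>F t in at_top. t \<ge> 1 \<and> I t \<noteq> {} \<and> (\<forall>y\<in>I t. \<bar>y\<bar> \<le> r / 2 * t)"
      using ev[of "r/2"] r by simp
    then show "\<forall>\<^sub>F t in at_top. dist (Sup (I t) / t) 0 < r"
    proof eventually_elim
      case (elim t)
      then have "\<bar>Sup (I t)\<bar> \<le> r / 2 * t" using set_bounds(4)[of "I t" "r/2*t"] by blast
      then have "\<bar>Sup (I t) / t\<bar> \<le> r / 2" using elim by (simp add: abs_div pos_divide_le_eq)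
      moreover have "dist (Sup (I t) / t) 0 = \<bar>Sup (I t) / t\<bar>" by (simp only: dist_real_def diff_zero)
      ultimately show ?case using r by linarith
    qed
  qed
  show "(\<forall>\<^sub>F t in at_top. level_front u t \<noteq> {} \<and>
               bdd_below ((\<lambda>x. x \<bullet> n) ` level_front u t) \<and>
               bdd_above ((\<lambda>x. x \<bullet> n) ` level_front u t)) \<and>
           ((\<lambda>t. Inf ((\<lambda>x. x \<bullet> n) ` level_front u t) / t) \<longlongrightarrow> 0) at_top \<and>
           ((\<lambda>t. Sup ((\<lambda>x. x \<bullet> n) ` level_front u t) / t) \<longlongrightarrow> 0) at_top"
    using P1 P2 P3 unfolding I_def by blast
qed

end
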